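(* The greedy forward search algorithm with criterion $\widehat G_\infty$ outputs a cross-group ordering $g$ with $$\Delta\mathrm{xAUC}(g)\le\max\Big(\frac{1}{n_1^a},\frac{1}{n_1^b}\Big).$$
   Context: Setting: two disjoint finite groups $a$, $b$ of samples, each sample $u$ having label $Y_u\in\{0,1\}$; $n^a,n^b$ group sizes, $n_1^a,n_0^a$ numbers of label-1/label-0 samples in $a$ (similarly for $b$), all $\ge1$, $k_{a,b}=n_1^an_0^b$, $k_{b,a}=n_0^an_1^b$. Fixed within-group rankings $\mathrm{p}^a=(\mathrm{p}^{a(1)},\dots,\mathrm{p}^{a(n^a)})$, $\mathrm{p}^b=(\mathrm{p}^{b(1)},\dots,\mathrm{p}^{b(n^b)})$. A cross-group ordering is a ranked list of all samples of $a\cup b$ whose restrictions to $a,b$ are $\mathrm{p}^a,\mathrm{p}^b$; $\mathrm{xAUC}_o(a,b)$ is the fraction of pairs (label-1 sample of $a$, label-0 sample of $b$) in which the first is ranked above the second, $\mathrm{xAUC}_o(b,a)$ symmetrically, $\Delta\mathrm{xAUC}(o)=|\mathrm{xAUC}_o(a,b)-\mathrm{xAUC}_o(b,a)|$. An $(i,j)$-partial ordering ($0\le i\le n^a$, $0\le j\le n^b$) is a ranked list of $\mathrm{p}^{a(1)},\dots,\mathrm{p}^{a(i)},\mathrm{p}^{b(1)},\dots,\mathrm{p}^{b(j)}$ preserving within-group orders. $H_{ab}(o)$ = number of pairs $(k,h)$ with $k\le i$, $h\le n^b$, $Y_{\mathrm{p}^{a(k)}}=1$, $Y_{\mathrm{p}^{b(h)}}=0$,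 and either $h>j$ or ($h\le j$ and $\mathrm{p}^{a(k)}$ precedes $\mathrm{p}^{b(h)}$ in $o$); $H_{ba}(o)$ = number of pairs $(h,k)$ with $h\le j$, $k\le n^a$, $Y_{\mathrm{p}^{b(h)}}=1$, $Y_{\mathrm{p}^{a(k)}}=0$, and either $k>i$ or ($k\le i$ and $\mathrm{p}^{b(h)}$ precedes $\mathrm{p}^{a(k)}$ in $o$). $\widehat G_\infty(o)=-|H_{ab}(o)/k_{a,b}-H_{ba}(o)/k_{b,a}|$; for a full ordering it equals $-\Delta\mathrm{xAUC}(o)$. Greedy forward search: start from the empty $(0,0)$-partial ordering $g$. While $g$ is an $(i,j)$-partial ordering with $(i,j)\ne(n^a,n^b)$: if $i<n^a$ and $j<n^b$, replace $g$ by $g\oplus\mathrm{p}^{a(i+1)}$ if $\widehat G_\infty(g\oplus\mathrm{p}^{a(i+1)})\ge\widehat G_\infty(g\oplus\mathrm{p}^{b(j+1)})$ and by $g\oplus\mathrm{p}^{b(j+1)}$ otherwise; if one group is exhausted, append the next element of the other group ($\oplus$ = append at the bottom). Output the final $g$. *)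

theory Defs
  imports Main HOL.Real
begin

text \<open>Group a is given by its within-group ranking
  pa (a list of distinct samples, top first), group b by pb.
  Orderings (partial or full) are lists of samples, top first.\<close>

definition precedes :: "'u list \<Rightarrow> 'u \<Rightarrow> 'u \<Rightarrow> bool" where
  "precedes r u v \<longleftrightarrow> (\<exists>k l. k < l \<and> l < length r \<and> r ! k = u \<and> r ! l = v)"

definition n1 :: "('u \<Rightarrow> nat) \<Rightarrow> 'u list \<Rightarrow> nat" where
  "n1 Y p = card {u \<in> set p. Y u = 1}"

definition n0 :: "('u \<Rightarrow> nat) \<Rightarrow> 'u list \<Rightarrow> nat" where
  "n0 Y p = card {u \<in> set p. Y u = 0}"

definition is_partial_ordering :: "'u list \<Rightarrow> 'u list \<Rightarrow> nat \<Rightarrow> nat \<Rightarrow> 'u list \<Rightarrow> bool" where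
  "is_partial_ordering pa pb i j r \<longleftrightarrow>
     distinct r \<and> set r = set (take i pa) \<union> set (take j pb) \<and>
     filter (\<lambda>u. u \<in> set pa) r = take i pa \<and> filter (\<lambda>u. u \<in> set pb) r = take j pb"

definition is_cross_ordering :: "'u list \<Rightarrow> 'u list \<Rightarrow> 'u list \<Rightarrow> bool" where
  "is_cross_ordering pa pb r \<longleftrightarrow> is_partial_ordering pa pb (length pa) (length pb) r"

definition xAUC :: "('u \<Rightarrow> nat) \<Rightarrow> 'u list \<Rightarrow> 'u list \<Rightarrow> 'u list \<Rightarrow> real" where
  "xAUC Y p q r =
     real (card {(u, v). u \<in> set p \<and> Y u = 1 \<and> v \<in> set q \<and> Y v = 0 \<and> precedes r u v})
     / real (n1 Y p * n0 Y q)"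

definition delta_xAUC :: "('u \<Rightarrow> nat) \<Rightarrow> 'u list \<Rightarrow> 'u list \<Rightarrow> 'u list \<Rightarrow> real" where
  "delta_xAUC Y pa pb r = \<bar>xAUC Y pa pb r - xAUC Y pb pa r\<bar>"

text \<open>H_{ab} of an (i,j)-partial ordering (indices 0-based: k < i means among the first i).\<close>
definition H_ab :: "('u \<Rightarrow> nat) \<Rightarrow> 'u list \<Rightarrow> 'u list \<Rightarrow> nat \<Rightarrow> nat \<Rightarrow> 'u list \<Rightarrow> nat" where
  "H_ab Y pa pb i j r = card {(k, h). k < i \<and> h < length pb \<and> Y (pa ! k) = 1 \<and> Y (pb ! h) = 0 \<and>
       (j \<le> h \<or> (h < j \<and> precedes r (pa ! k) (pb ! h)))}"

definition H_ba :: "('u \<Rightarrow> nat) \<Rightarrow> 'u list \<Rightarrow> 'u list \<Rightarrow> nat \<Rightarrow> nat \<Rightarrow> 'u list \<Rightarrow> nat" where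
  "H_ba Y pa pb i j r = card {(h, k). h < j \<and> k < length pa \<and> Y (pb ! h) = 1 \<and> Y (pa ! k) = 0 \<and>
       (i \<le> k \<or> (k < i \<and> precedes r (pb ! h) (pa ! k)))}"

definition G_inf :: "('u \<Rightarrow> nat) \<Rightarrow> 'u list \<Rightarrow> 'u list \<Rightarrow> nat \<Rightarrow> nat \<Rightarrow> 'u list \<Rightarrow> real" where
  "G_inf Y pa pb i j r =
     - \<bar>real (H_ab Y pa pb i j r) / real (n1 Y pa * n0 Y pb)
        - real (H_ba Y pa pb i j r) / real (n0 Y pa * n1 Y pb)\<bar>"

definition greedy_step :: "('u \<Rightarrow> nat) \<Rightarrow> 'u list \<Rightarrow> 'u list \<Rightarrow> 'u list \<times> nat \<times> nat \<Rightarrow> 'u list \<times> nat \<times> nat" where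
  "greedy_step Y pa pb s = (case s of (g, i, j) \<Rightarrow>
     if i < length pa \<and> j < length pb then
       (if G_inf Y pa pb (i + 1) j (g @ [pa ! i]) \<ge> G_inf Y pa pb i (j + 1) (g @ [pb ! j])
        then (g @ [pa ! i], i + 1, j) else (g @ [pb ! j], i, j + 1))
     else if i < length pa then (g @ [pa ! i], i + 1, j)
     else if j < length pb then (g @ [pb ! j], i, j + 1)
     else (g, i, j))"

text \<open>Each non-final step increases i+j by one, so after length pa + length pb steps the
  loop has terminated at (n^a, n^b); further steps are no-ops.\<close>
definition greedy_output :: "('u \<Rightarrow> nat) \<Rightarrow> 'u list \<Rightarrow> 'u list \<Rightarrow> 'u list" where
  "greedy_output Y pa pb = fst ((greedy_step Y pa pb ^^ (length pa + length pb)) ([], 0, 0))"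

end

theory Submission
  imports Defs
begin

lemma prec_snoc_ne: "v \<noteq> x \<Longrightarrow> precedes (g@[x]) u v \<longleftrightarrow> precedes g u v"
  unfolding precedes_def
proof
  assume ne: "v \<noteq> x" and "\<exists>k l. k < l \<and> l < length (g @ [x]) \<and> (g @ [x]) ! k = u \<and> (g @ [x]) ! l = v"
  then obtain k l where kl: "k < l" "l < length g + 1" "(g @ [x]) ! k = u" "(g @ [x]) ! l = v" by auto
  have "l \<noteq> length g" using kl ne by auto
  hence "l < length g" using kl by auto
  thus "\<exists>k l. k < l \<and> l < length g \<and> g ! k = u \<and> g ! l = v"
    using kl by (metis nth_append_left order.strict_trans)
next
  assume "\<exists>k l. k < l \<and> l < length g \<and> g ! k = u \<and> g ! l = v"
  then obtain k l where kl: "k < l" "l < length g" "g ! k = u" "g ! l = v" by auto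
  thus "\<exists>k l. k < l \<and> l < length (g @ [x]) \<and> (g @ [x]) ! k = u \<and> (g @ [x]) ! l = v"
    by (metis length_append_singleton less_Suc_eq nth_append_left order.strict_trans)
qed

lemma prec_snoc_eq: "precedes (g@[x]) u x \<longleftrightarrow> u \<in> set g"
  unfolding precedes_def
proof
  assume "\<exists>k l. k < l \<and> l < length (g @ [x]) \<and> (g @ [x]) ! k = u \<and> (g @ [x]) ! l = x"
  then obtain k l where kl: "k < l" "l < length g + 1" "(g @ [x]) ! k = u" by auto
  hence "k < length g" by auto
  thus "u \<in> set g" using kl by (metis nth_append_left nth_mem)
next
  assume "u \<in> set g"
  then obtain k where "k < length g" "g ! k = u" by (auto simp: in_set_conv_nth)
  thus "\<exists>k l. k < l \<and> l < length (g @ [x]) \<and> (g @ [x]) ! k = u \<and> (g @ [x]) ! l = x"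
    by (intro exI[of _ k] exI[of _ "length g"]) (auto simp: nth_append)
qed

lemma prec_set: "precedes g u v \<Longrightarrow> u \<in> set g"
  unfolding precedes_def by auto

lemma H_ba_swap: "H_ba Y pa pb i j r = H_ab Y pb pa j i r"
  unfolding H_ba_def H_ab_def by simp

lemma po_swap: "is_partial_ordering pa pb i j r = is_partial_ordering pb pa j i r"
  unfolding is_partial_ordering_def by auto

lemma n0_idx: "distinct pb \<Longrightarrow> card {h. h < length pb \<and> Y (pb!h) = 0} = n0 Y pb"
proof -
  assume d: "distinct pb"
  have "{u \<in> set pb. Y u = 0} = nth pb ` {h. h < length pb \<and> Y (pb!h) = 0}"
    by (auto simp: in_set_conv_nth)
  moreover have "inj_on (nth pb) {h. h < length pb \<and> Y (pb!h) = 0}"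
    using d by (simp add: inj_on_nth)
  ultimately show ?thesis unfolding n0_def by (simp add: card_image)
qed

lemma po_not_in:
  assumes po: "is_partial_ordering pa pb i j g" and i: "i < length pa"
    and d: "distinct pa" and disj: "set pa \<inter> set pb = {}"
  shows "pa ! i \<notin> set g"
proof
  assume "pa ! i \<in> set g"
  hence "pa ! i \<in> set (take i pa) \<or> pa ! i \<in> set (take j pb)"
    using po unfolding is_partial_ordering_def by auto
  moreover have "pa ! i \<notin> set (take j pb)" using disj i
    by (meson disjoint_iff in_set_takeD nth_mem)
  moreover have "pa ! i \<notin> set (take i pa)"
  proof
    assume "pa ! i \<in> set (take i pa)"
    then obtain k where "k < length (take i pa)" "take i pa ! k = pa ! i" by (auto simp: in_set_conv_nth)
    thus False using d i by (simp add: nth_eq_iff_index_eq)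
  qed
  ultimately show False by auto
qed

lemma po_in:
  assumes po: "is_partial_ordering pa pb i j g" and k: "k < i" and i: "i \<le> length pa"
  shows "pa ! k \<in> set g"
proof -
  have "pa ! k \<in> set (take i pa)" using k i by (metis in_set_conv_nth length_take min.absorb2 nth_take)
  thus ?thesis using po unfolding is_partial_ordering_def by auto
qed

lemma po_snoc_first:
  assumes po: "is_partial_ordering pa pb i j g" and i: "i < length pa"
    and d: "distinct pa" and disj: "set pa \<inter> set pb = {}"
  shows "is_partial_ordering pa pb (i+1) j (g @ [pa ! i])"
proof -
  have ni: "pa ! i \<notin> set g" using po_not_in[OF po i d disj] .
  have nb: "pa ! i \<notin> set pb" using disj i by (meson disjoint_iff nth_mem)
  have t: "take (i+1) pa = take i pa @ [pa ! i]" using i by (simp add: take_Suc_conv_app_nth)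
  show ?thesis using po ni nb i unfolding is_partial_ordering_def t by auto
qed

lemma H_ab_first:
  assumes po: "is_partial_ordering pa pb i j g" and i: "i < length pa"
    and d: "distinct pa" and db: "distinct pb" and disj: "set pa \<inter> set pb = {}"
  shows "\<exists>c. H_ab Y pa pb (i+1) j (g @ [pa ! i]) = H_ab Y pa pb i j g + c \<and> c \<le> n0 Y pb
            \<and> (j = length pb \<longrightarrow> c = 0)"
proof -
  define x where "x = pa ! i"
  have ni: "x \<notin> set g" unfolding x_def using po_not_in[OF po i d disj] .
  define Sn where "Sn = {(k, h). k < i+1 \<and> h < length pb \<and> Y (pa ! k) = 1 \<and> Y (pb ! h) = 0 \<and>
       (j \<le> h \<or> (h < j \<and> precedes (g@[x]) (pa ! k) (pb ! h)))}"
  define So where "So = {(k, h). k < i \<and> h < length pb \<and> Y (pa ! k) = 1 \<and> Y (pb ! h) = 0 \<and>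
       (j \<le> h \<or> (h < j \<and> precedes g (pa ! k) (pb ! h)))}"
  define E where "E = {(k, h). k = i \<and> h < length pb \<and> Y (pa ! k) = 1 \<and> Y (pb ! h) = 0 \<and> j \<le> h}"
  have neq: "\<And>h. h < length pb \<Longrightarrow> pb ! h \<noteq> x" unfolding x_def using disj i
    by (metis disjoint_iff nth_mem)
  have "Sn = So \<union> E"
  proof (rule set_eqI, clarify)
    fix k h
    show "((k, h) \<in> Sn) = ((k, h) \<in> So \<union> E)"
    proof (cases "k < i")
      case True
      have "h < length pb \<Longrightarrow> precedes (g@[x]) (pa ! k) (pb ! h) = precedes g (pa ! k) (pb ! h)"
        using prec_snoc_ne[OF neq] by blast
      then show ?thesis unfolding Sn_def So_def E_def using True by auto
    next
      case False
      have np: "h < length pb \<Longrightarrow> \<not> precedes (g@[x]) x (pb ! h)"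
        using prec_snoc_ne[OF neq] ni prec_set by metis
      show ?thesis
      proof (cases "k = i")
        case True
        then show ?thesis unfolding Sn_def So_def E_def using np x_def by auto
      next
        case False
        then show ?thesis unfolding Sn_def So_def E_def using \<open>\<not> k < i\<close> by auto
      qed
    qed
  qed
  moreover have "So \<inter> E = {}" unfolding So_def E_def by auto
  moreover have "finite So" unfolding So_def
    by (rule finite_subset[of _ "{..<i} \<times> {..<length pb}"]) auto
  moreover have "finite E" unfolding E_def
    by (rule finite_subset[of _ "{..<i+1} \<times> {..<length pb}"]) auto
  ultimately have cs: "card Sn = card So + card E" by (simp add: card_Un_disjoint)
  have "E \<subseteq> (\<lambda>h. (i, h)) ` {h. h < length pb \<and> Y (pb!h) = 0}" unfolding E_def by auto
  hence "card E \<le> card ((\<lambda>h. (i, h)) ` {h. h < length pb \<and> Y (pb!h) = 0})"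
    by (intro card_mono) auto
  also have "\<dots> \<le> card {h. h < length pb \<and> Y (pb!h) = 0}" by (rule card_image_le) auto
  also have "\<dots> = n0 Y pb" using n0_idx[OF db] .
  finally have ce: "card E \<le> n0 Y pb" .
  have "j = length pb \<longrightarrow> E = {}" unfolding E_def by auto
  hence e0: "j = length pb \<longrightarrow> card E = 0" by simp
  have h1: "H_ab Y pa pb (i+1) j (g @ [pa ! i]) = card Sn" by (simp only: H_ab_def Sn_def x_def)
  have h2: "H_ab Y pa pb i j g = card So" by (simp only: H_ab_def So_def)
  show ?thesis
    apply (rule exI[of _ "card E"])
    using cs ce e0 h1 h2 by simp
qed

lemma H_ab_second:
  assumes po: "is_partial_ordering pa pb i j g" and j: "j < length pb" and i: "i \<le> length pa"
    and db: "distinct pb"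
  shows "H_ab Y pa pb i (j+1) (g @ [pb ! j]) = H_ab Y pa pb i j g"
proof -
  have "{(k, h). k < i \<and> h < length pb \<and> Y (pa ! k) = 1 \<and> Y (pb ! h) = 0 \<and>
       (j+1 \<le> h \<or> (h < j+1 \<and> precedes (g@[pb ! j]) (pa ! k) (pb ! h)))}
      = {(k, h). k < i \<and> h < length pb \<and> Y (pa ! k) = 1 \<and> Y (pb ! h) = 0 \<and>
       (j \<le> h \<or> (h < j \<and> precedes g (pa ! k) (pb ! h)))}"
  proof (rule set_eqI, clarify)
    fix k h
    show "((k, h) \<in> {(k, h). k < i \<and> h < length pb \<and> Y (pa ! k) = 1 \<and> Y (pb ! h) = 0 \<and>
       (j+1 \<le> h \<or> (h < j+1 \<and> precedes (g@[pb ! j]) (pa ! k) (pb ! h)))})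
      = ((k, h) \<in> {(k, h). k < i \<and> h < length pb \<and> Y (pa ! k) = 1 \<and> Y (pb ! h) = 0 \<and>
       (j \<le> h \<or> (h < j \<and> precedes g (pa ! k) (pb ! h)))})"
    proof (cases "k < i")
      case True
      have inn: "pa ! k \<in> set g" using po_in[OF po True i] .
      have "h < j \<Longrightarrow> precedes (g@[pb ! j]) (pa ! k) (pb ! h) = precedes g (pa ! k) (pb ! h)"
        using db j by (intro prec_snoc_ne) (simp add: nth_eq_iff_index_eq)
      moreover have "precedes (g@[pb ! j]) (pa ! k) (pb ! j)" using inn prec_snoc_eq by metis
      ultimately show ?thesis using True
      proof -
        assume p1: "h < j \<Longrightarrow> precedes (g@[pb ! j]) (pa ! k) (pb ! h) = precedes g (pa ! k) (pb ! h)"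
          and p2: "precedes (g@[pb ! j]) (pa ! k) (pb ! j)"
        have "(j+1 \<le> h \<or> (h < j+1 \<and> precedes (g@[pb ! j]) (pa ! k) (pb ! h)))
              = (j \<le> h \<or> (h < j \<and> precedes g (pa ! k) (pb ! h)))"
        proof (cases "h < j")
          case True thus ?thesis using p1 by simp
        next
          case False
          hence "h = j \<or> j + 1 \<le> h" by linarith
          thus ?thesis using p2 False by auto
        qed
        thus ?thesis by simp
      qed
    next
      case False
      then show ?thesis by auto
    qed
  qed
  thus ?thesis unfolding H_ab_def by simp
qed


lemma real_step:
  fixes D M a b :: real
  assumes "\<bar>D\<bar> \<le> M" "0 \<le> a" "a \<le> M" "0 \<le> b" "b \<le> M"
  shows "-\<bar>D + a\<bar> \<ge> -M \<or> -\<bar>D - b\<bar> \<ge> -M"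
  using assms by (cases "D \<ge> 0") (simp_all add: abs_if)

lemma frac_bound:
  fixes c n0 n1 :: nat
  assumes "c \<le> n0" "n1 \<ge> 1" "n0 \<ge> 1"
  shows "real c / real (n1 * n0) \<le> 1 / real n1"
proof -
  have "real c / real (n1 * n0) \<le> real n0 / real (n1 * n0)"
    using assms by (intro divide_right_mono) auto
  also have "\<dots> = 1 / real n1" using assms by simp
  finally show ?thesis .
qed

lemma step_inv:
  fixes pa pb :: "'u list" and Y :: "'u \<Rightarrow> nat"
  assumes da: "distinct pa" and db: "distinct pb" and disj: "set pa \<inter> set pb = {}"
    and a1: "n1 Y pa \<ge> 1" and a0: "n0 Y pa \<ge> 1" and b1: "n1 Y pb \<ge> 1" and b0: "n0 Y pb \<ge> 1"
    and i: "i \<le> length pa" and j: "j \<le> length pb" and lt: "i + j < length pa + length pb"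
    and po: "is_partial_ordering pa pb i j g"
    and G: "G_inf Y pa pb i j g \<ge> - max (1 / real (n1 Y pa)) (1 / real (n1 Y pb))"
  shows "\<exists>g' i' j'. greedy_step Y pa pb (g, i, j) = (g', i', j') \<and> i' \<le> length pa \<and> j' \<le> length pb
     \<and> i' + j' = i + j + 1 \<and> is_partial_ordering pa pb i' j' g'
     \<and> G_inf Y pa pb i' j' g' \<ge> - max (1 / real (n1 Y pa)) (1 / real (n1 Y pb))"
proof -
  define M where "M = max (1 / real (n1 Y pa)) (1 / real (n1 Y pb))"
  define Ka where "Ka = real (n1 Y pa * n0 Y pb)"
  define Kb where "Kb = real (n0 Y pa * n1 Y pb)"
  define A where "A = H_ab Y pa pb i j g"
  define B where "B = H_ba Y pa pb i j g"
  define D where "D = real A / Ka - real B / Kb"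
  have GD: "G_inf Y pa pb i j g = - \<bar>D\<bar>" unfolding G_inf_def D_def A_def B_def Ka_def Kb_def by simp
  have DM: "\<bar>D\<bar> \<le> M" using G GD M_def by simp
  have po': "is_partial_ordering pb pa j i g" using po po_swap by metis
  have disj': "set pb \<inter> set pa = {}" using disj by auto
  have o1: "i < length pa \<Longrightarrow> is_partial_ordering pa pb (i+1) j (g @ [pa ! i]) \<and>
     (\<exists>a. 0 \<le> a \<and> a \<le> M \<and> (j = length pb \<longrightarrow> a = 0) \<and> G_inf Y pa pb (i+1) j (g @ [pa ! i]) = -\<bar>D + a\<bar>)"
  proof -
    assume ii: "i < length pa"
    obtain c where c: "H_ab Y pa pb (i+1) j (g @ [pa ! i]) = A + c" "c \<le> n0 Y pb" "j = length pb \<longrightarrow> c = 0"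
      using H_ab_first[OF po ii da db disj, of Y] A_def by auto
    have hb: "H_ba Y pa pb (i+1) j (g @ [pa ! i]) = B"
      unfolding B_def H_ba_swap using H_ab_second[OF po' ii j da] by simp
    have cb: "real c / Ka \<le> M" unfolding Ka_def M_def using frac_bound[OF c(2) a1 b0] by linarith
    have "G_inf Y pa pb (i+1) j (g @ [pa ! i]) = -\<bar>D + real c / Ka\<bar>"
      unfolding G_inf_def c(1) hb D_def Ka_def Kb_def by (simp add: add_divide_distrib)
    moreover have "0 \<le> real c / Ka" unfolding Ka_def by simp
    ultimately show ?thesis using po_snoc_first[OF po ii da disj] cb c(3)
      by (intro conjI exI[of _ "real c / Ka"]) auto
  qed
  have o2: "j < length pb \<Longrightarrow> is_partial_ordering pa pb i (j+1) (g @ [pb ! j]) \<and>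
     (\<exists>b. 0 \<le> b \<and> b \<le> M \<and> (i = length pa \<longrightarrow> b = 0) \<and> G_inf Y pa pb i (j+1) (g @ [pb ! j]) = -\<bar>D - b\<bar>)"
  proof -
    assume jj: "j < length pb"
    obtain c where c: "H_ab Y pb pa (j+1) i (g @ [pb ! j]) = B + c" "c \<le> n0 Y pa" "i = length pa \<longrightarrow> c = 0"
      using H_ab_first[OF po' jj db da disj', of Y] B_def H_ba_swap by metis
    have ha: "H_ab Y pa pb i (j+1) (g @ [pb ! j]) = A"
      unfolding A_def using H_ab_second[OF po jj i db] by simp
    have cb: "real c / real (n1 Y pb * n0 Y pa) \<le> M" unfolding M_def using frac_bound[OF c(2) b1 a0] by linarith
    have "G_inf Y pa pb i (j+1) (g @ [pb ! j]) = -\<bar>D - real c / Kb\<bar>"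
      unfolding G_inf_def H_ba_swap c(1) ha D_def Ka_def Kb_def B_def[symmetric]
      by (simp add: add_divide_distrib)
    moreover have "0 \<le> real c / Kb" unfolding Kb_def by simp
    moreover have "real c / Kb \<le> M" using cb unfolding Kb_def by (simp add: mult.commute)
    moreover have "is_partial_ordering pa pb i (j+1) (g @ [pb ! j])"
      using po_snoc_first[OF po' jj db disj'] po_swap by metis
    ultimately show ?thesis using c(3) by (intro conjI exI[of _ "real c / Kb"]) auto
  qed
  show ?thesis
  proof (cases "i < length pa \<and> j < length pb")
    case True
    obtain a where a: "0 \<le> a" "a \<le> M" "G_inf Y pa pb (i+1) j (g @ [pa ! i]) = -\<bar>D + a\<bar>"
      using o1 True by blast
    obtain b where b: "0 \<le> b" "b \<le> M" "G_inf Y pa pb i (j+1) (g @ [pb ! j]) = -\<bar>D - b\<bar>"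
      using o2 True by blast
    have or: "G_inf Y pa pb (i+1) j (g @ [pa ! i]) \<ge> -M \<or> G_inf Y pa pb i (j+1) (g @ [pb ! j]) \<ge> -M"
      using real_step[OF DM a(1,2) b(1,2)] a(3) b(3) by simp
    show ?thesis
    proof (cases "G_inf Y pa pb (i+1) j (g @ [pa ! i]) \<ge> G_inf Y pa pb i (j+1) (g @ [pb ! j])")
      case c: True
      have st: "greedy_step Y pa pb (g,i,j) = (g @ [pa!i], i+1, j)" using True c by (simp add: greedy_step_def)
      have "G_inf Y pa pb (i+1) j (g @ [pa ! i]) \<ge> -M" using or c by linarith
      thus ?thesis using True o1 st i j unfolding M_def by (intro exI[of _ "g @ [pa!i]"] exI[of _ "i+1"] exI[of _ j]) simp
    next
      case c: False
      have st: "greedy_step Y pa pb (g,i,j) = (g @ [pb!j], i, j+1)" using True c by (simp add: greedy_step_def)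
      have "G_inf Y pa pb i (j+1) (g @ [pb ! j]) \<ge> -M" using or c by linarith
      thus ?thesis using True o2 st i j unfolding M_def by (intro exI[of _ "g @ [pb!j]"] exI[of _ "i"] exI[of _ "j+1"]) simp
    qed
  next
    case False
    show ?thesis
    proof (cases "i < length pa")
      case True
      hence jj: "j = length pb" using False j by auto
      obtain a where a: "a = 0" "G_inf Y pa pb (i+1) j (g @ [pa ! i]) = -\<bar>D + a\<bar>"
        using o1 True jj by blast
      have st: "greedy_step Y pa pb (g,i,j) = (g @ [pa!i], i+1, j)" using True jj by (simp add: greedy_step_def)
      have "G_inf Y pa pb (i+1) j (g @ [pa ! i]) \<ge> -M" using a DM by simp
      thus ?thesis using True o1 st i j unfolding M_def by (intro exI[of _ "g @ [pa!i]"] exI[of _ "i+1"] exI[of _ j]) simp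
    next
      case ff: False
      hence ii: "i = length pa" and jj: "j < length pb" using i lt by auto
      obtain b where b: "b = 0" "G_inf Y pa pb i (j+1) (g @ [pb ! j]) = -\<bar>D - b\<bar>"
        using o2 ii jj by blast
      have st: "greedy_step Y pa pb (g,i,j) = (g @ [pb!j], i, j+1)" using ii jj by (simp add: greedy_step_def)
      have "G_inf Y pa pb i (j+1) (g @ [pb ! j]) \<ge> -M" using b DM by simp
      thus ?thesis using jj o2 st i j unfolding M_def by (intro exI[of _ "g @ [pb!j]"] exI[of _ "i"] exI[of _ "j+1"]) simp
    qed
  qed
qed


lemma iter_inv:
  fixes pa pb :: "'u list" and Y :: "'u \<Rightarrow> nat"
  assumes da: "distinct pa" and db: "distinct pb" and disj: "set pa \<inter> set pb = {}"
    and a1: "n1 Y pa \<ge> 1" and a0: "n0 Y pa \<ge> 1" and b1: "n1 Y pb \<ge> 1" and b0: "n0 Y pb \<ge> 1"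
  shows "n \<le> length pa + length pb \<Longrightarrow> \<exists>g i j. (greedy_step Y pa pb ^^ n) ([], 0, 0) = (g, i, j)
     \<and> i \<le> length pa \<and> j \<le> length pb \<and> i + j = n \<and> is_partial_ordering pa pb i j g
     \<and> G_inf Y pa pb i j g \<ge> - max (1 / real (n1 Y pa)) (1 / real (n1 Y pb))"
proof (induction n)
  case 0
  have "is_partial_ordering pa pb 0 0 []" unfolding is_partial_ordering_def by simp
  moreover have "H_ab Y pa pb 0 0 [] = 0" unfolding H_ab_def by simp
  moreover have "H_ba Y pa pb 0 0 [] = 0" unfolding H_ba_def by simp
  ultimately have "G_inf Y pa pb 0 0 [] = 0" "is_partial_ordering pa pb 0 0 []" unfolding G_inf_def by simp_all
  moreover have "0 \<le> max (1 / real (n1 Y pa)) (1 / real (n1 Y pb))" by (simp add: le_max_iff_disj)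
  ultimately show ?case by simp
next
  case (Suc n)
  then obtain g i j where h: "(greedy_step Y pa pb ^^ n) ([], 0, 0) = (g, i, j)"
     "i \<le> length pa" "j \<le> length pb" "i + j = n" "is_partial_ordering pa pb i j g"
     "G_inf Y pa pb i j g \<ge> - max (1 / real (n1 Y pa)) (1 / real (n1 Y pb))" by auto
  have lt: "i + j < length pa + length pb" using Suc.prems h(4) by simp
  obtain g' i' j' where s: "greedy_step Y pa pb (g, i, j) = (g', i', j')" "i' \<le> length pa" "j' \<le> length pb"
     "i' + j' = i + j + 1" "is_partial_ordering pa pb i' j' g'"
     "G_inf Y pa pb i' j' g' \<ge> - max (1 / real (n1 Y pa)) (1 / real (n1 Y pb))"
    using step_inv[OF da db disj a1 a0 b1 b0 h(2) h(3) lt h(5) h(6)] by blast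
  show ?case
    apply (rule exI[of _ g'], rule exI[of _ i'], rule exI[of _ j'])
    using s h by simp
qed

lemma final_H:
  assumes da: "distinct pa" and db: "distinct pb"
  shows "H_ab Y pa pb (length pa) (length pb) g =
    card {(u, v). u \<in> set pa \<and> Y u = 1 \<and> v \<in> set pb \<and> Y v = 0 \<and> precedes g u v}"
proof -
  define S where "S = {(k, h). k < length pa \<and> h < length pb \<and> Y (pa ! k) = 1 \<and> Y (pb ! h) = 0 \<and>
       precedes g (pa ! k) (pb ! h)}"
  define f where "f = (\<lambda>(k, h). (pa ! k, pb ! h))"
  have "H_ab Y pa pb (length pa) (length pb) g = card S" unfolding H_ab_def S_def
    by (rule arg_cong[where f=card]) auto
  moreover have "inj_on f S"
  proof (rule inj_onI)
    fix p q assume "p \<in> S" "q \<in> S" "f p = f q"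
    thus "p = q" unfolding S_def f_def using da db
      by (auto simp: nth_eq_iff_index_eq)
  qed
  moreover have "f ` S = {(u, v). u \<in> set pa \<and> Y u = 1 \<and> v \<in> set pb \<and> Y v = 0 \<and> precedes g u v}"
  proof
    show "f ` S \<subseteq> {(u, v). u \<in> set pa \<and> Y u = 1 \<and> v \<in> set pb \<and> Y v = 0 \<and> precedes g u v}" unfolding S_def f_def by auto
  next
    show "{(u, v). u \<in> set pa \<and> Y u = 1 \<and> v \<in> set pb \<and> Y v = 0 \<and> precedes g u v} \<subseteq> f ` S"
    proof clarify
      fix u v assume u: "u \<in> set pa" "Y u = 1" and v: "v \<in> set pb" "Y v = 0" and p: "precedes g u v"
      obtain k where k: "k < length pa" "pa ! k = u" using u by (auto simp: in_set_conv_nth)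
      obtain h where hh: "h < length pb" "pb ! h = v" using v by (auto simp: in_set_conv_nth)
      have "(k, h) \<in> S" unfolding S_def using k hh u v p by auto
      moreover have "f (k, h) = (u, v)" unfolding f_def using k hh by simp
      ultimately show "(u, v) \<in> f ` S" by (metis image_eqI)
    qed
  qed
  ultimately show ?thesis by (metis card_image)
qed

theorem mainTheorem7:
  fixes pa pb :: "'u list" and Y :: "'u \<Rightarrow> nat"
  assumes "distinct pa" and "distinct pb" and "set pa \<inter> set pb = {}"
    and "\<forall>u \<in> set pa \<union> set pb. Y u \<in> {0, 1}"
    and "n1 Y pa \<ge> 1" and "n0 Y pa \<ge> 1" and "n1 Y pb \<ge> 1" and "n0 Y pb \<ge> 1"
  shows "is_cross_ordering pa pb (greedy_output Y pa pb) \<and>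
         delta_xAUC Y pa pb (greedy_output Y pa pb)
           \<le> max (1 / real (n1 Y pa)) (1 / real (n1 Y pb))"
proof -
  obtain g i j where h: "(greedy_step Y pa pb ^^ (length pa + length pb)) ([], 0, 0) = (g, i, j)"
     "i \<le> length pa" "j \<le> length pb" "i + j = length pa + length pb" "is_partial_ordering pa pb i j g"
     "G_inf Y pa pb i j g \<ge> - max (1 / real (n1 Y pa)) (1 / real (n1 Y pb))"
    using iter_inv[OF assms(1,2,3,5,6,7,8), of "length pa + length pb"] by auto
  have ij: "i = length pa" "j = length pb" using h(2,3,4) by auto
  have go: "greedy_output Y pa pb = g" unfolding greedy_output_def h(1) by simp
  have c1: "is_cross_ordering pa pb g" unfolding is_cross_ordering_def using h(5) ij by simp
  have Ha: "H_ab Y pa pb (length pa) (length pb) g =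
    card {(u, v). u \<in> set pa \<and> Y u = 1 \<and> v \<in> set pb \<and> Y v = 0 \<and> precedes g u v}"
    using final_H[OF assms(1,2)] .
  have Hb: "H_ba Y pa pb (length pa) (length pb) g =
    card {(u, v). u \<in> set pb \<and> Y u = 1 \<and> v \<in> set pa \<and> Y v = 0 \<and> precedes g u v}"
    unfolding H_ba_swap using final_H[OF assms(2,1)] .
  have "delta_xAUC Y pa pb g = - G_inf Y pa pb (length pa) (length pb) g"
    unfolding delta_xAUC_def xAUC_def G_inf_def Ha Hb by (simp add: mult.commute)
  thus ?thesis using c1 go h(6) ij by simp
qed

end
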